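(* Let $G=\prod_{1\leq i\leq k}C_{p^{r_i}}$ be a finite non-cyclic abelian $p$-group with $r_1\geq r_2\geq\dots\geq r_k$ and $k\geq 2$. Then $\Delta_D(G)^*$ is disconnected if and only if $r_2=1$.
   Context: $C_n$ denotes the cyclic group of order $n$. The deep commuting graph $\Delta_D(G)$ has vertex set $G$, distinct vertices adjacent iff their preimages commute in a Schur cover $\tilde G$ of $G$ (a central extension $\{e\}\to M(G)\to\tilde G\to G\to\{e\}$ with kernel contained in $Z(\tilde G)\cap[\tilde G,\tilde G]$, of maximal order; $M(G)$ the Schur multiplier). A vertex is dominant if adjacent to every other vertex; the reduced graph $\Gamma^*$ is the subgraph induced by the non-dominant vertices. *)

theory Defs
  imports "HOL-Algebra.Algebra"
begin

definition group_center :: "('a, 'b) monoid_scheme \<Rightarrow> 'a set" where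
  "group_center H = {z \<in> carrier H. \<forall>h \<in> carrier H. z \<otimes>\<^bsub>H\<^esub> h = h \<otimes>\<^bsub>H\<^esub> z}"

definition stem_extension ::
  "('a, 'c) monoid_scheme \<Rightarrow> ('b, 'd) monoid_scheme \<Rightarrow> ('a \<Rightarrow> 'b) \<Rightarrow> bool" where
  "stem_extension H G \<pi> \<longleftrightarrow> group H \<and> group G \<and> \<pi> \<in> hom H G \<and>
     \<pi> ` carrier H = carrier G \<and>
     kernel H G \<pi> \<subseteq> group_center H \<inter> derived H (carrier H)"

text \<open>Every finite group is isomorphic to one with carrier in nat, so maximality is
  taken over stem extensions whose groups are carried by nat.\<close>
definition schur_cover ::
  "nat monoid \<Rightarrow> ('b, 'd) monoid_scheme \<Rightarrow> (nat \<Rightarrow> 'b) \<Rightarrow> bool" where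
  "schur_cover H G \<pi> \<longleftrightarrow> finite (carrier H) \<and> stem_extension H G \<pi> \<and>
     (\<forall>(H' :: nat monoid) \<pi>'. finite (carrier H') \<and> stem_extension H' G \<pi>'
        \<longrightarrow> card (carrier H') \<le> card (carrier H))"

definition deep_adj ::
  "nat monoid \<Rightarrow> ('b, 'd) monoid_scheme \<Rightarrow> (nat \<Rightarrow> 'b) \<Rightarrow> 'b \<Rightarrow> 'b \<Rightarrow> bool" where
  "deep_adj H G \<pi> x y \<longleftrightarrow> x \<in> carrier G \<and> y \<in> carrier G \<and> x \<noteq> y \<and>
     (\<exists>a \<in> carrier H. \<exists>b \<in> carrier H. \<pi> a = x \<and> \<pi> b = y \<and>
        a \<otimes>\<^bsub>H\<^esub> b = b \<otimes>\<^bsub>H\<^esub> a)"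

definition dominant :: "'a set \<Rightarrow> ('a \<Rightarrow> 'a \<Rightarrow> bool) \<Rightarrow> 'a \<Rightarrow> bool" where
  "dominant V E v \<longleftrightarrow> v \<in> V \<and> (\<forall>w \<in> V. w \<noteq> v \<longrightarrow> E v w)"

definition reduced_vertices :: "'a set \<Rightarrow> ('a \<Rightarrow> 'a \<Rightarrow> bool) \<Rightarrow> 'a set" where
  "reduced_vertices V E = {v \<in> V. \<not> dominant V E v}"

definition induced_disconnected :: "'a set \<Rightarrow> ('a \<Rightarrow> 'a \<Rightarrow> bool) \<Rightarrow> bool" where
  "induced_disconnected W E \<longleftrightarrow>
     (\<exists>u \<in> W. \<exists>w \<in> W. (u, w) \<notin> {(a, b). a \<in> W \<and> b \<in> W \<and> E a b}\<^sup>*)"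

end

theory Submission
  imports Defs "HOL-Computational_Algebra.Primes"
begin

declare One_nat_def [simp del]

primrec prodH :: "('a,'b) monoid_scheme \<Rightarrow> (nat \<Rightarrow> 'a) \<Rightarrow> nat \<Rightarrow> 'a" where
  "prodH M f 0 = \<one>\<^bsub>M\<^esub>"
| "prodH M f (Suc t) = prodH M f t \<otimes>\<^bsub>M\<^esub> f (Suc t)"

locale ab =
  fixes k :: nat and n :: "nat \<Rightarrow> nat"
  assumes n_ge: "\<And>i. i \<in> {1..k} \<Longrightarrow> n i \<ge> 2"
  and n_dvd: "\<And>i j. 1 \<le> i \<Longrightarrow> i \<le> j \<Longrightarrow> j \<le> k \<Longrightarrow> n j dvd n i"
begin

abbreviation "I \<equiv> {1..k}"
abbreviation "G \<equiv> product_group {1..k} (\<lambda>i. integer_mod_group (n i))"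

definition red :: "(nat \<Rightarrow> int) \<Rightarrow> (nat \<Rightarrow> int)" where
  "red u = (\<lambda>i\<in>I. u i mod int (n i))"

lemma n_pos: "i \<in> I \<Longrightarrow> n i > 0" using n_ge[of i] by auto

lemma carrier_G: "carrier G = PiE I (\<lambda>i. {0..<int (n i)})"
  unfolding carrier_product_group
proof (rule PiE_cong)
  fix i assume "i \<in> I" then show "carrier (integer_mod_group (n i)) = {0..<int (n i)}"
    using n_pos[of i] by (simp add: carrier_integer_mod_group)
qed

lemma group_G: "group G" by simp

lemma red_in: "red u \<in> carrier G"
  using n_pos unfolding carrier_G red_def by (auto simp: PiE_iff)

lemma red_id: "x \<in> carrier G \<Longrightarrow> red x = x"
  unfolding carrier_G red_def by (fastforce simp: PiE_def extensional_def fun_eq_iff Pi_iff)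

lemma red_eq: "(\<And>i. i \<in> I \<Longrightarrow> u i mod int (n i) = v i mod int (n i)) \<Longrightarrow> red u = red v"
  by (auto simp: red_def fun_eq_iff)

lemma red_add: "red u \<otimes>\<^bsub>G\<^esub> red v = red (\<lambda>i. u i + v i)"
  by (auto simp: red_def fun_eq_iff mod_simps)

lemma one_G: "\<one>\<^bsub>G\<^esub> = red (\<lambda>i. 0)"
  by (simp add: red_def restrict_def)

lemma inv_G: "inv\<^bsub>G\<^esub> (red u) = red (\<lambda>i. - u i)"
proof -
  have "inv\<^bsub>G\<^esub> (red u) = (\<lambda>i\<in>I. inv\<^bsub>integer_mod_group (n i)\<^esub> (red u i))"
    using red_in by (intro inv_product_group) auto
  also have "\<dots> = red (\<lambda>i. - u i)"
    using red_in[of u] by (auto simp: red_def fun_eq_iff mod_simps carrier_integer_mod_group)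
  finally show ?thesis .
qed

lemma pow_G: "red u [^]\<^bsub>G\<^esub> (c::nat) = red (\<lambda>i. int c * u i)"
proof (induction c)
  case 0 then show ?case by (simp add: red_def restrict_def)
next
  case (Suc c)
  have "red u [^]\<^bsub>G\<^esub> Suc c = red (\<lambda>i. int c * u i) \<otimes>\<^bsub>G\<^esub> red u"
    by (simp only: nat_pow_Suc Suc.IH)
  also have "\<dots> = red (\<lambda>i. int (Suc c) * u i)" by (simp only: red_add) (simp add: algebra_simps)
  finally show ?case .
qed

lemma comm_G: "comm_group G"
proof (rule group.group_comm_groupI[OF group_G])
  fix x y assume "x \<in> carrier G" "y \<in> carrier G"
  then show "x \<otimes>\<^bsub>G\<^esub> y = y \<otimes>\<^bsub>G\<^esub> x" by (auto simp: add.commute)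
qed

sublocale Gp: comm_group G by (rule comm_G)

end

declare carrier_product_group[simp del] mult_product_group[simp del] one_product_group[simp del] inv_product_group[simp del]

locale stem = ab +
  fixes H :: "'h monoid" and \<pi> :: "'h \<Rightarrow> (nat \<Rightarrow> int)"
  assumes stem: "stem_extension H G \<pi>"
begin

lemma grpH: "group H" using stem by (simp add: stem_extension_def)
sublocale H: group H by (rule grpH)

lemma hom: "\<pi> \<in> hom H G" using stem by (simp add: stem_extension_def)
lemma surj: "\<pi> ` carrier H = carrier G" using stem by (simp add: stem_extension_def)
lemma kerc: "kernel H G \<pi> \<subseteq> group_center H \<inter> derived H (carrier H)"
  using stem by (simp add: stem_extension_def)

sublocale hg: group_hom H G \<pi>
  using hom group_G by (simp add: group_hom_def group_hom_axioms_def grpH)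

definition lift :: "(nat \<Rightarrow> int) \<Rightarrow> 'h" where
  "lift x = inv_into (carrier H) \<pi> x"

lemma lift: "x \<in> carrier G \<Longrightarrow> lift x \<in> carrier H \<and> \<pi> (lift x) = x"
  using surj unfolding lift_def by (metis f_inv_into_f inv_into_into)

definition cm :: "'h \<Rightarrow> 'h \<Rightarrow> 'h" where
  "cm a b = a \<otimes>\<^bsub>H\<^esub> b \<otimes>\<^bsub>H\<^esub> inv\<^bsub>H\<^esub> a \<otimes>\<^bsub>H\<^esub> inv\<^bsub>H\<^esub> b"

lemma cm_closed: "a \<in> carrier H \<Longrightarrow> b \<in> carrier H \<Longrightarrow> cm a b \<in> carrier H"
  by (simp add: cm_def)

lemma ker_central: "z \<in> kernel H G \<pi> \<Longrightarrow> h \<in> carrier H \<Longrightarrow> z \<otimes>\<^bsub>H\<^esub> h = h \<otimes>\<^bsub>H\<^esub> z"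
  using kerc by (auto simp: group_center_def)

lemma ker_carrier: "z \<in> kernel H G \<pi> \<Longrightarrow> z \<in> carrier H"
  by (simp add: kernel_def)

lemma cm_ker: assumes "a \<in> carrier H" "b \<in> carrier H" shows "cm a b \<in> kernel H G \<pi>"
proof -
    have "\<pi> (cm a b) = \<pi> a \<otimes>\<^bsub>G\<^esub> \<pi> b \<otimes>\<^bsub>G\<^esub> inv\<^bsub>G\<^esub> \<pi> a \<otimes>\<^bsub>G\<^esub> inv\<^bsub>G\<^esub> \<pi> b"
    using assms by (simp add: cm_def hg.hom_mult hg.hom_inv)
  also have "\<dots> = \<one>\<^bsub>G\<^esub>"
  proof -
    have p: "\<pi> a \<in> carrier G" "\<pi> b \<in> carrier G" using assms hg.hom_closed by auto
    have "\<pi> a \<otimes>\<^bsub>G\<^esub> \<pi> b \<otimes>\<^bsub>G\<^esub> inv\<^bsub>G\<^esub> \<pi> a \<otimes>\<^bsub>G\<^esub> inv\<^bsub>G\<^esub> \<pi> b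
        = \<pi> b \<otimes>\<^bsub>G\<^esub> (\<pi> a \<otimes>\<^bsub>G\<^esub> inv\<^bsub>G\<^esub> \<pi> a) \<otimes>\<^bsub>G\<^esub> inv\<^bsub>G\<^esub> \<pi> b"
      using p by (subst Gp.m_comm[of "\<pi> a" "\<pi> b"]) (simp_all add: Gp.m_assoc)
    also have "\<dots> = \<one>\<^bsub>G\<^esub>" using p by (simp add: Gp.r_inv Gp.r_one)
    finally show ?thesis .
  qed
  finally show ?thesis using assms by (simp add: kernel_def cm_closed)
qed

lemma cm_central: "a \<in> carrier H \<Longrightarrow> b \<in> carrier H \<Longrightarrow> h \<in> carrier H \<Longrightarrow>
   cm a b \<otimes>\<^bsub>H\<^esub> h = h \<otimes>\<^bsub>H\<^esub> cm a b"
  using cm_ker ker_central by blast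

lemma cm_self: "a \<in> carrier H \<Longrightarrow> cm a a = \<one>\<^bsub>H\<^esub>"
  unfolding cm_def by (simp add: H.m_assoc[of a a] H.m_assoc[of a "inv\<^bsub>H\<^esub> a"])

lemma cm_swap: "a \<in> carrier H \<Longrightarrow> b \<in> carrier H \<Longrightarrow> cm a b = inv\<^bsub>H\<^esub> (cm b a)"
  by (simp add: cm_def H.inv_mult_group H.m_assoc)

lemma cm_mult1:
  assumes a: "a \<in> carrier H" and a': "a' \<in> carrier H" and b: "b \<in> carrier H"
  shows "cm (a \<otimes>\<^bsub>H\<^esub> a') b = cm a' b \<otimes>\<^bsub>H\<^esub> cm a b"
proof -
  define z where "z = cm a' b"
  have z: "z \<in> carrier H" using a' b by (simp add: z_def cm_closed)
  have zc: "\<And>h. h \<in> carrier H \<Longrightarrow> z \<otimes>\<^bsub>H\<^esub> h = h \<otimes>\<^bsub>H\<^esub> z"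
    using cm_central a' b z_def by blast
  have zb: "a' \<otimes>\<^bsub>H\<^esub> b \<otimes>\<^bsub>H\<^esub> inv\<^bsub>H\<^esub> a' = z \<otimes>\<^bsub>H\<^esub> b"
    using a' b by (simp add: z_def cm_def H.m_assoc)
  have "cm (a \<otimes>\<^bsub>H\<^esub> a') b = a \<otimes>\<^bsub>H\<^esub> (a' \<otimes>\<^bsub>H\<^esub> b \<otimes>\<^bsub>H\<^esub> inv\<^bsub>H\<^esub> a') \<otimes>\<^bsub>H\<^esub> inv\<^bsub>H\<^esub> a \<otimes>\<^bsub>H\<^esub> inv\<^bsub>H\<^esub> b"
    using a a' b by (simp add: cm_def H.inv_mult_group H.m_assoc)
  also have "\<dots> = a \<otimes>\<^bsub>H\<^esub> (z \<otimes>\<^bsub>H\<^esub> b) \<otimes>\<^bsub>H\<^esub> inv\<^bsub>H\<^esub> a \<otimes>\<^bsub>H\<^esub> inv\<^bsub>H\<^esub> b"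
    by (simp only: zb)
  also have "\<dots> = (a \<otimes>\<^bsub>H\<^esub> z) \<otimes>\<^bsub>H\<^esub> (b \<otimes>\<^bsub>H\<^esub> inv\<^bsub>H\<^esub> a \<otimes>\<^bsub>H\<^esub> inv\<^bsub>H\<^esub> b)"
    using a b z by (simp add: H.m_assoc)
  also have "\<dots> = z \<otimes>\<^bsub>H\<^esub> cm a b"
    using a b z by (simp add: zc[OF a, symmetric] H.m_assoc cm_def)
  finally show ?thesis by (simp add: z_def)
qed

lemma cm_comm: "a \<in> carrier H \<Longrightarrow> b \<in> carrier H \<Longrightarrow> c \<in> carrier H \<Longrightarrow> d \<in> carrier H \<Longrightarrow>
  cm a b \<otimes>\<^bsub>H\<^esub> cm c d = cm c d \<otimes>\<^bsub>H\<^esub> cm a b"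
  using cm_central cm_closed by blast

lemma cm_mult2:
  assumes a: "a \<in> carrier H" and b: "b \<in> carrier H" and b': "b' \<in> carrier H"
  shows "cm a (b \<otimes>\<^bsub>H\<^esub> b') = cm a b \<otimes>\<^bsub>H\<^esub> cm a b'"
proof -
  have "cm a (b \<otimes>\<^bsub>H\<^esub> b') = inv\<^bsub>H\<^esub> (cm b' a \<otimes>\<^bsub>H\<^esub> cm b a)"
    using a b b' by (simp add: cm_swap[of a] cm_mult1)
  also have "\<dots> = inv\<^bsub>H\<^esub> (cm b a) \<otimes>\<^bsub>H\<^esub> inv\<^bsub>H\<^esub> (cm b' a)"
    using a b b' by (simp add: H.inv_mult_group cm_closed)
  also have "\<dots> = cm a b \<otimes>\<^bsub>H\<^esub> cm a b'"
    using a b b' by (simp add: cm_swap[of a])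
  finally show ?thesis .
qed

lemma cm_ker_left: assumes "a \<in> carrier H" "z \<in> kernel H G \<pi>" "b \<in> carrier H"
  shows "cm (a \<otimes>\<^bsub>H\<^esub> z) b = cm a b"
proof -
  have z: "z \<in> carrier H" using assms ker_carrier by blast
  have "cm z b = \<one>\<^bsub>H\<^esub>"
    using assms z by (simp add: cm_def ker_central[OF assms(2) assms(3)] H.m_assoc[of b z])
  then show ?thesis using assms z by (simp add: cm_mult1 cm_closed)
qed

definition C :: "(nat \<Rightarrow> int) \<Rightarrow> (nat \<Rightarrow> int) \<Rightarrow> 'h" where
  "C x y = cm (lift x) (lift y)"

lemma decomp: assumes "a \<in> carrier H"
  shows "lift (\<pi> a) \<otimes>\<^bsub>H\<^esub> (inv\<^bsub>H\<^esub> (lift (\<pi> a)) \<otimes>\<^bsub>H\<^esub> a) = a"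
    and "inv\<^bsub>H\<^esub> (lift (\<pi> a)) \<otimes>\<^bsub>H\<^esub> a \<in> kernel H G \<pi>"
proof -
  have l: "lift (\<pi> a) \<in> carrier H" "\<pi> (lift (\<pi> a)) = \<pi> a" using lift assms hg.hom_closed by auto
  show "lift (\<pi> a) \<otimes>\<^bsub>H\<^esub> (inv\<^bsub>H\<^esub> (lift (\<pi> a)) \<otimes>\<^bsub>H\<^esub> a) = a"
    using l assms by (simp add: H.m_assoc[symmetric])
  show "inv\<^bsub>H\<^esub> (lift (\<pi> a)) \<otimes>\<^bsub>H\<^esub> a \<in> kernel H G \<pi>"
  proof -
    have "\<pi> (inv\<^bsub>H\<^esub> (lift (\<pi> a)) \<otimes>\<^bsub>H\<^esub> a) = inv\<^bsub>G\<^esub> (\<pi> a) \<otimes>\<^bsub>G\<^esub> \<pi> a"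
      using l assms by (simp only: hg.hom_mult H.inv_closed hg.hom_inv)
    also have "\<dots> = \<one>\<^bsub>G\<^esub>" using assms hg.hom_closed by (simp only: Gp.l_inv)
    finally show ?thesis using l assms by (simp add: kernel_def)
  qed
qed

lemma cm_C: assumes "a \<in> carrier H" "b \<in> carrier H" shows "cm a b = C (\<pi> a) (\<pi> b)"
proof -
  have la: "lift (\<pi> a) \<in> carrier H" "lift (\<pi> b) \<in> carrier H" using lift assms hg.hom_closed by auto
  have 1: "cm a b = cm (lift (\<pi> a)) b"
    using cm_ker_left[OF la(1) decomp(2)[OF assms(1)] assms(2)] decomp(1)[OF assms(1)] by simp
  have 2: "cm b (lift (\<pi> a)) = cm (lift (\<pi> b)) (lift (\<pi> a))"
    using cm_ker_left[OF la(2) decomp(2)[OF assms(2)] la(1)] decomp(1)[OF assms(2)] by simp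
  have "cm a b = inv\<^bsub>H\<^esub> (cm b (lift (\<pi> a)))" by (simp only: 1 cm_swap[OF la(1) assms(2)])
  also have "\<dots> = inv\<^bsub>H\<^esub> (cm (lift (\<pi> b)) (lift (\<pi> a)))" by (simp only: 2)
  also have "\<dots> = C (\<pi> a) (\<pi> b)" by (simp only: C_def cm_swap[OF la(1) la(2)])
  finally show ?thesis .
qed

end

context stem begin

definition B :: "(nat \<Rightarrow> int) \<Rightarrow> (nat \<Rightarrow> int) \<Rightarrow> 'h" where
  "B u v = C (red u) (red v)"

definition \<delta> :: "nat \<Rightarrow> nat \<Rightarrow> int" where
  "\<delta> j = (\<lambda>i. if i = j then 1 else 0)"

lemma C_ker: "x \<in> carrier G \<Longrightarrow> y \<in> carrier G \<Longrightarrow> C x y \<in> kernel H G \<pi>"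
  unfolding C_def using lift cm_ker by blast

lemma B_ker: "B u v \<in> kernel H G \<pi>"
  unfolding B_def using C_ker red_in by blast

lemma B_carrier: "B u v \<in> carrier H"
  using B_ker ker_carrier by blast

lemma B_central: "h \<in> carrier H \<Longrightarrow> B u v \<otimes>\<^bsub>H\<^esub> h = h \<otimes>\<^bsub>H\<^esub> B u v"
  using B_ker ker_central by blast

lemma B_comm: "B u v \<otimes>\<^bsub>H\<^esub> B u' v' = B u' v' \<otimes>\<^bsub>H\<^esub> B u v"
  using B_central B_carrier by blast

lemma B_add1: "B (\<lambda>i. u i + u' i) v = B u v \<otimes>\<^bsub>H\<^esub> B u' v"
proof -
  define l1 where "l1 = lift (red u)"
  define l2 where "l2 = lift (red u')"
  define l3 where "l3 = lift (red v)"
  have l: "l1 \<in> carrier H" "l2 \<in> carrier H" "l3 \<in> carrier H"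
     "\<pi> l1 = red u" "\<pi> l2 = red u'" "\<pi> l3 = red v"
    using lift red_in unfolding l1_def l2_def l3_def by auto
  have "B (\<lambda>i. u i + u' i) v = C (\<pi> (l1 \<otimes>\<^bsub>H\<^esub> l2)) (\<pi> l3)"
    using l by (simp add: B_def hg.hom_mult red_add)
  also have "\<dots> = cm (l1 \<otimes>\<^bsub>H\<^esub> l2) l3" using l by (simp add: cm_C)
  also have "\<dots> = cm l2 l3 \<otimes>\<^bsub>H\<^esub> cm l1 l3" using l by (simp add: cm_mult1)
  also have "\<dots> = B u' v \<otimes>\<^bsub>H\<^esub> B u v" using l by (simp add: cm_C B_def)
  finally show ?thesis using B_comm by simp
qed

lemma B_add2: "B u (\<lambda>i. v i + v' i) = B u v \<otimes>\<^bsub>H\<^esub> B u v'"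
proof -
  define l1 where "l1 = lift (red v)"
  define l2 where "l2 = lift (red v')"
  define l3 where "l3 = lift (red u)"
  have l: "l1 \<in> carrier H" "l2 \<in> carrier H" "l3 \<in> carrier H"
     "\<pi> l1 = red v" "\<pi> l2 = red v'" "\<pi> l3 = red u"
    using lift red_in unfolding l1_def l2_def l3_def by auto
  have "B u (\<lambda>i. v i + v' i) = C (\<pi> l3) (\<pi> (l1 \<otimes>\<^bsub>H\<^esub> l2))"
    using l by (simp add: B_def hg.hom_mult red_add)
  also have "\<dots> = cm l3 (l1 \<otimes>\<^bsub>H\<^esub> l2)" using l by (simp add: cm_C)
  also have "\<dots> = cm l3 l1 \<otimes>\<^bsub>H\<^esub> cm l3 l2" using l by (simp add: cm_mult2)
  also have "\<dots> = B u v \<otimes>\<^bsub>H\<^esub> B u v'" using l by (simp add: cm_C B_def)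
  finally show ?thesis .
qed

lemma B_swap: "B u v = inv\<^bsub>H\<^esub> (B v u)"
  unfolding B_def C_def using lift red_in cm_swap by blast

lemma B_red1: "(\<And>i. i \<in> I \<Longrightarrow> u i = u' i) \<Longrightarrow> B u v = B u' v"
  unfolding B_def by (metis red_eq)

lemma B_red2: "(\<And>i. i \<in> I \<Longrightarrow> v i = v' i) \<Longrightarrow> B u v = B u v'"
  unfolding B_def by (metis red_eq)

lemma B_zero1: "B (\<lambda>i. 0) v = \<one>\<^bsub>H\<^esub>"
proof -
  have "B (\<lambda>i. 0) v = B (\<lambda>i. 0) v \<otimes>\<^bsub>H\<^esub> B (\<lambda>i. 0) v"
    using B_add1[of "\<lambda>i. 0" "\<lambda>i. 0" v] by simp
  then show ?thesis using B_carrier by (metis H.l_one H.one_closed H.r_cancel)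
qed

lemma B_zero2: "B u (\<lambda>i. 0) = \<one>\<^bsub>H\<^esub>"
  using B_swap[of u "\<lambda>i. 0"] B_zero1 by simp

lemma B_neg1: "B (\<lambda>i. - u i) v = inv\<^bsub>H\<^esub> (B u v)"
proof -
  have "B u v \<otimes>\<^bsub>H\<^esub> B (\<lambda>i. - u i) v = \<one>\<^bsub>H\<^esub>"
    using B_add1[of u "\<lambda>i. - u i" v] B_zero1 by simp
  then show ?thesis using B_carrier by (metis H.inv_equality B_comm)
qed

lemma B_neg2: "B u (\<lambda>i. - v i) = inv\<^bsub>H\<^esub> (B u v)"
  using B_swap[of u "\<lambda>i. - v i"] B_neg1[of v u] B_swap[of v u] B_carrier by simp

lemma B_self: "B u u = \<one>\<^bsub>H\<^esub>"
  unfolding B_def C_def using lift red_in cm_self by blast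

lemma B_smul_nat: "B (\<lambda>i. int m * u i) v = B u (\<lambda>i. int m * v i)"
proof (induction m)
  case 0 then show ?case using B_zero1 B_zero2 by simp
next
  case (Suc m)
  have "B (\<lambda>i. int (Suc m) * u i) v = B (\<lambda>i. int m * u i) v \<otimes>\<^bsub>H\<^esub> B u v"
    using B_add1[of "\<lambda>i. int m * u i" u v] by (simp add: algebra_simps)
  also have "\<dots> = B u (\<lambda>i. int m * v i) \<otimes>\<^bsub>H\<^esub> B u v" by (simp add: Suc)
  also have "\<dots> = B u (\<lambda>i. int (Suc m) * v i)"
    using B_add2[of u "\<lambda>i. int m * v i" v] by (simp add: algebra_simps)
  finally show ?case .
qed

lemma B_smul: "B (\<lambda>i. c * u i) v = B u (\<lambda>i. c * v i)"
proof (cases "c \<ge> 0")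
  case True
  define m where "m = nat c"
  have "c = int m" using True by (simp add: m_def)
  then show ?thesis using B_smul_nat by simp
next
  case False
  define m where "m = nat (- c)"
  have c: "c = - int m" using False by (simp add: m_def)
  have e1: "(\<lambda>i. c * u i) = (\<lambda>i. - (int m * u i))" "(\<lambda>i. c * v i) = (\<lambda>i. - (int m * v i))"
    using c by auto
  have "B (\<lambda>i. c * u i) v = inv\<^bsub>H\<^esub> (B (\<lambda>i. int m * u i) v)"
    unfolding e1 by (rule B_neg1)
  also have "\<dots> = inv\<^bsub>H\<^esub> (B u (\<lambda>i. int m * v i))" by (simp only: B_smul_nat)
  also have "\<dots> = B u (\<lambda>i. c * v i)"
    unfolding e1 by (rule B_neg2[symmetric])
  finally show ?thesis .
qed

lemma B_self_smul_nat: "B u (\<lambda>i. int m * u i) = \<one>\<^bsub>H\<^esub>"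
proof (induction m)
  case 0 then show ?case using B_zero2 by simp
next
  case (Suc m)
  have "B u (\<lambda>i. int (Suc m) * u i) = B u (\<lambda>i. int m * u i) \<otimes>\<^bsub>H\<^esub> B u u"
    using B_add2[of u "\<lambda>i. int m * u i" u] by (simp add: algebra_simps)
  then show ?case using Suc B_self by simp
qed

lemma B_self_smul: "B u (\<lambda>i. c * u i) = \<one>\<^bsub>H\<^esub>"
proof (cases "c \<ge> 0")
  case True
  define m where "m = nat c"
  have "c = int m" using True by (simp add: m_def)
  then show ?thesis using B_self_smul_nat by simp
next
  case False
  define m where "m = nat (- c)"
  have c: "c = - int m" using False by (simp add: m_def)
  have e1: "(\<lambda>i. c * u i) = (\<lambda>i. - (int m * u i))" using c by auto
  show ?thesis unfolding e1 B_neg2 B_self_smul_nat by simp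
qed

lemma B_dvd:
  assumes j: "j \<in> I" and d: "\<And>i. i \<in> I \<Longrightarrow> int (n j) dvd (u i - u' i)"
  shows "B u (\<delta> j) = B u' (\<delta> j)"
proof -
  define w where "w = (\<lambda>i. (u i - u' i) div int (n j))"
  have "B (\<lambda>i. u i - u' i) (\<delta> j) = B (\<lambda>i. int (n j) * w i) (\<delta> j)"
    using d by (intro B_red1) (simp add: w_def)
  also have "\<dots> = B w (\<lambda>i. int (n j) * \<delta> j i)" by (rule B_smul)
  also have "\<dots> = B w (\<lambda>i. 0)"
  proof (rule B_red2[THEN trans], rule refl)
    show "B w (\<lambda>i. int (n j) * \<delta> j i) = B w (\<lambda>i. 0)"
      unfolding B_def
    proof -
      have "red (\<lambda>i. int (n j) * \<delta> j i) = red (\<lambda>i. 0)"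
        by (rule red_eq) (simp add: \<delta>_def)
      then show "C (red w) (red (\<lambda>i. int (n j) * \<delta> j i)) = C (red w) (red (\<lambda>i. 0))" by simp
    qed
  qed
  also have "\<dots> = \<one>\<^bsub>H\<^esub>" by (rule B_zero2)
  finally have z: "B (\<lambda>i. u i - u' i) (\<delta> j) = \<one>\<^bsub>H\<^esub>" .
  have "B u (\<delta> j) = B (\<lambda>i. u' i + (u i - u' i)) (\<delta> j)" by simp
  also have "\<dots> = B u' (\<delta> j)" using B_add1[of u' "\<lambda>i. u i - u' i" "\<delta> j"] z B_carrier by simp
  finally show ?thesis .
qed

end

context ab begin
definition P :: "(nat \<times> nat) set" where
  "P = {(i,j). 1 \<le> i \<and> i < j \<and> j \<le> k}"
definition A :: "(nat \<times> nat \<Rightarrow> int) set" where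
  "A = PiE P (\<lambda>q. {0..<int (n (snd q))})"
definition mm :: "(nat \<Rightarrow> int) \<Rightarrow> (nat \<Rightarrow> int) \<Rightarrow> (nat \<times> nat \<Rightarrow> int)" where
  "mm x y = (\<lambda>q\<in>P. (x (fst q) * y (snd q) - x (snd q) * y (fst q)) mod int (n (snd q)))"
definition M :: "(nat \<times> nat \<Rightarrow> int) \<Rightarrow> nat \<Rightarrow> (nat \<Rightarrow> int)" where
  "M m j = (\<lambda>i. if i < j then m (i,j) else 0)"
definition tr :: "nat \<Rightarrow> (nat \<Rightarrow> int) \<Rightarrow> (nat \<Rightarrow> int)" where
  "tr t x = (\<lambda>i. if i \<le> t then x i else 0)"
definition Y :: "(nat \<Rightarrow> int) \<Rightarrow> (nat \<Rightarrow> int) \<Rightarrow> nat \<Rightarrow> (nat \<Rightarrow> int)" where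
  "Y x y j = (\<lambda>i. if i < j then x i * y j - x j * y i else 0)"

lemma P_n: "q \<in> P \<Longrightarrow> n (snd q) > 0"
  using n_pos by (auto simp: P_def)

lemma finite_P: "finite P"
proof -
  have "P \<subseteq> {0..k} \<times> {0..k}" by (auto simp: P_def)
  then show ?thesis by (rule finite_subset) simp
qed

lemma finite_A: "finite A"
  unfolding A_def using finite_P by (intro finite_PiE) auto

lemma mm_A: "mm x y \<in> A"
  using P_n unfolding A_def mm_def by (auto simp: PiE_iff)

end

context stem begin

definition \<Phi> :: "(nat \<times> nat \<Rightarrow> int) \<Rightarrow> 'h" where
  "\<Phi> m = prodH H (\<lambda>j. B (M m j) (\<delta> j)) k"

lemma prodH_cong: "(\<And>j. 1 \<le> j \<Longrightarrow> j \<le> t \<Longrightarrow> f j = g j) \<Longrightarrow> prodH H f t = prodH H g t"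
  by (induction t) (auto simp: One_nat_def)

lemma prodH_ker: "(\<And>j. f j \<in> kernel H G \<pi>) \<Longrightarrow> prodH H f t \<in> kernel H G \<pi>"
proof (induction t)
  case 0 then show ?case by (simp add: kernel_def)
next
  case (Suc t)
  then have "prodH H f t \<in> carrier H" "f (Suc t) \<in> carrier H"
     "\<pi> (prodH H f t) = \<one>\<^bsub>G\<^esub>" "\<pi> (f (Suc t)) = \<one>\<^bsub>G\<^esub>"
    by (auto simp: kernel_def)
  then show ?case by (simp add: kernel_def hg.hom_mult)
qed

lemma prodH_mult:
  assumes f: "\<And>j. f j \<in> kernel H G \<pi>" and g: "\<And>j. g j \<in> kernel H G \<pi>"
  shows "prodH H f t \<otimes>\<^bsub>H\<^esub> prodH H g t = prodH H (\<lambda>j. f j \<otimes>\<^bsub>H\<^esub> g j) t"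
proof (induction t)
  case 0 then show ?case by simp
next
  case (Suc t)
  have c: "prodH H f t \<in> carrier H" "prodH H g t \<in> carrier H" "f (Suc t) \<in> carrier H" "g (Suc t) \<in> carrier H"
    using prodH_ker f g ker_carrier by blast+
  have "prodH H f (Suc t) \<otimes>\<^bsub>H\<^esub> prodH H g (Suc t)
      = prodH H f t \<otimes>\<^bsub>H\<^esub> (f (Suc t) \<otimes>\<^bsub>H\<^esub> prodH H g t) \<otimes>\<^bsub>H\<^esub> g (Suc t)"
    using c by (simp add: H.m_assoc)
  also have "\<dots> = prodH H f t \<otimes>\<^bsub>H\<^esub> (prodH H g t \<otimes>\<^bsub>H\<^esub> f (Suc t)) \<otimes>\<^bsub>H\<^esub> g (Suc t)"
    using ker_central[OF f c(2)] by simp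
  also have "\<dots> = (prodH H f t \<otimes>\<^bsub>H\<^esub> prodH H g t) \<otimes>\<^bsub>H\<^esub> (f (Suc t) \<otimes>\<^bsub>H\<^esub> g (Suc t))"
    using c by (simp add: H.m_assoc)
  also have "\<dots> = prodH H (\<lambda>j. f j \<otimes>\<^bsub>H\<^esub> g j) (Suc t)" by (simp add: Suc)
  finally show ?case .
qed

lemma prodH_one: "prodH H (\<lambda>j. \<one>\<^bsub>H\<^esub>) t = \<one>\<^bsub>H\<^esub>"
  by (induction t) auto

lemma form: "B (tr t x) (tr t y) = prodH H (\<lambda>j. B (Y x y j) (\<delta> j)) t"
proof (induction t)
  case 0
  have "B (tr 0 x) (tr 0 y) = B (\<lambda>i. 0) (tr 0 y)"
    by (rule B_red1) (auto simp: tr_def)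
  then show ?case by (simp add: B_zero1)
next
  case (Suc t)
  define s where "s = Suc t"
  define a where "a = tr t x"
  define b where "b = tr t y"
  define \<alpha> where "\<alpha> = (\<lambda>i. x s * \<delta> s i)"
  define \<beta> where "\<beta> = (\<lambda>i. y s * \<delta> s i)"
  have tx: "tr s x = (\<lambda>i. a i + \<alpha> i)" "tr s y = (\<lambda>i. b i + \<beta> i)"
    by (auto simp: tr_def a_def b_def \<alpha>_def \<beta>_def \<delta>_def s_def fun_eq_iff le_Suc_eq)
  have ab: "B \<alpha> \<beta> = \<one>\<^bsub>H\<^esub>"
  proof -
    have "B \<alpha> \<beta> = B (\<delta> s) (\<lambda>i. x s * \<beta> i)" unfolding \<alpha>_def by (simp add: B_smul)
    also have "(\<lambda>i. x s * \<beta> i) = (\<lambda>i. (x s * y s) * \<delta> s i)" by (simp add: \<beta>_def mult.assoc)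
    finally show ?thesis by (simp add: B_self_smul)
  qed
  have h_aB: "B a \<beta> = B (\<lambda>i. y s * a i) (\<delta> s)" unfolding \<beta>_def by (simp add: B_smul)
  have h_Ab: "B \<alpha> b = B (\<lambda>i. - (x s * b i)) (\<delta> s)"
  proof -
    have "B \<alpha> b = B (\<delta> s) (\<lambda>i. x s * b i)" unfolding \<alpha>_def by (simp add: B_smul)
    also have "\<dots> = inv\<^bsub>H\<^esub> (B (\<lambda>i. x s * b i) (\<delta> s))" by (rule B_swap)
    also have "\<dots> = B (\<lambda>i. - (x s * b i)) (\<delta> s)" by (simp add: B_neg1)
    finally show ?thesis .
  qed
  have yd: "(\<lambda>i. y s * a i + - (x s * b i)) = Y x y s"
    by (auto simp: Y_def a_def b_def tr_def s_def fun_eq_iff)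
  have "B (tr s x) (tr s y) = (B a b \<otimes>\<^bsub>H\<^esub> B a \<beta>) \<otimes>\<^bsub>H\<^esub> (B \<alpha> b \<otimes>\<^bsub>H\<^esub> B \<alpha> \<beta>)"
    unfolding tx by (simp add: B_add1 B_add2)
  also have "\<dots> = B a b \<otimes>\<^bsub>H\<^esub> (B a \<beta> \<otimes>\<^bsub>H\<^esub> B \<alpha> b)"
    by (simp add: ab B_carrier H.m_assoc)
  also have "\<dots> = B a b \<otimes>\<^bsub>H\<^esub> B (Y x y s) (\<delta> s)"
    by (simp only: h_aB h_Ab B_add1[symmetric] yd)
  also have "\<dots> = prodH H (\<lambda>j. B (Y x y j) (\<delta> j)) s"
    by (simp add: s_def Suc a_def b_def)
  finally show ?case by (simp add: s_def)
qed

lemma C_Phi: assumes x: "x \<in> carrier G" and y: "y \<in> carrier G"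
  shows "C x y = \<Phi> (mm x y)"
proof -
  have "C x y = B x y" using x y by (simp add: B_def red_id)
  also have "\<dots> = B (tr k x) (tr k y)"
    by (rule trans[OF B_red1 B_red2]) (auto simp: tr_def)
  also have "\<dots> = prodH H (\<lambda>j. B (Y x y j) (\<delta> j)) k" by (rule form)
  also have "\<dots> = \<Phi> (mm x y)"
    unfolding \<Phi>_def
  proof (rule prodH_cong)
    fix j assume j: "1 \<le> j" "j \<le> k"
    show "B (Y x y j) (\<delta> j) = B (M (mm x y) j) (\<delta> j)"
    proof (rule B_dvd)
      show "j \<in> I" using j by simp
      fix i assume i: "i \<in> I"
      show "int (n j) dvd (Y x y j i - M (mm x y) j i)"
      proof (cases "i < j")
        case True
        then have "(i, j) \<in> P" using i j by (auto simp: P_def)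
        then have "M (mm x y) j i = (Y x y j i) mod int (n j)"
          using True by (simp add: M_def mm_def Y_def)
        then show ?thesis by (simp add: mod_eq_dvd_iff[symmetric])
      next
        case False then show ?thesis by (simp add: M_def Y_def)
      qed
    qed
  qed
  finally show ?thesis .
qed

end

context ab begin
definition addA :: "(nat \<times> nat \<Rightarrow> int) \<Rightarrow> (nat \<times> nat \<Rightarrow> int) \<Rightarrow> (nat \<times> nat \<Rightarrow> int)" where
  "addA a b = (\<lambda>q\<in>P. (a q + b q) mod int (n (snd q)))"
definition negA :: "(nat \<times> nat \<Rightarrow> int) \<Rightarrow> (nat \<times> nat \<Rightarrow> int)" where
  "negA a = (\<lambda>q\<in>P. (- a q) mod int (n (snd q)))"
definition zA :: "nat \<times> nat \<Rightarrow> int" where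
  "zA = (\<lambda>q\<in>P. 0)"

lemma zA_A: "zA \<in> A" using P_n by (auto simp: A_def zA_def)
lemma negA_A: "negA a \<in> A" using P_n by (auto simp: A_def negA_def)
lemma addA_A: "addA a b \<in> A" using P_n by (auto simp: A_def addA_def)
lemma addA_neg: "addA (negA a) a = zA"
  by (auto simp: addA_def negA_def zA_def fun_eq_iff mod_simps)

definition Rel :: "(nat \<Rightarrow> int) \<Rightarrow> (nat \<Rightarrow> int) \<Rightarrow> bool" where
  "Rel x y \<longleftrightarrow> (\<forall>i j. 1 \<le> i \<longrightarrow> i < j \<longrightarrow> j \<le> k \<longrightarrow> int (n j) dvd (x i * y j - x j * y i))"

lemma mm_zA: "mm x y = zA \<longleftrightarrow> Rel x y"
proof
  assume h: "mm x y = zA"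
  show "Rel x y" unfolding Rel_def
  proof (intro allI impI)
    fix i j :: nat assume ij: "1 \<le> i" "i < j" "j \<le> k"
    then have q: "(i,j) \<in> P" by (simp add: P_def)
    have "mm x y (i,j) = zA (i,j)" using h by simp
    then have "(x i * y j - x j * y i) mod int (n j) = 0" using q by (simp add: mm_def zA_def)
    then show "int (n j) dvd (x i * y j - x j * y i)" by (simp add: dvd_eq_mod_eq_0)
  qed
next
  assume h: "Rel x y"
  show "mm x y = zA"
  proof
    fix q show "mm x y q = zA q"
    proof (cases "q \<in> P")
      case True
      then obtain i j where q: "q = (i,j)" "1 \<le> i" "i < j" "j \<le> k" by (auto simp: P_def)
      then have "int (n j) dvd (x i * y j - x j * y i)" using h by (simp add: Rel_def)
      then show ?thesis using True q by (simp add: mm_def zA_def dvd_eq_mod_eq_0)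
    next
      case False then show ?thesis by (simp add: mm_def zA_def)
    qed
  qed
qed

end

context stem begin

lemma Phi_ker: "\<Phi> m \<in> kernel H G \<pi>"
  unfolding \<Phi>_def by (rule prodH_ker) (rule B_ker)

lemma Phi_carrier: "\<Phi> m \<in> carrier H"
  using Phi_ker ker_carrier by blast

lemma Phi_mult: "\<Phi> m \<otimes>\<^bsub>H\<^esub> \<Phi> m' = \<Phi> (addA m m')"
proof -
  have "\<Phi> m \<otimes>\<^bsub>H\<^esub> \<Phi> m' = prodH H (\<lambda>j. B (M m j) (\<delta> j) \<otimes>\<^bsub>H\<^esub> B (M m' j) (\<delta> j)) k"
    unfolding \<Phi>_def by (rule prodH_mult) (rule B_ker)+
  also have "\<dots> = \<Phi> (addA m m')"
    unfolding \<Phi>_def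
  proof (rule prodH_cong)
    fix j assume j: "1 \<le> j" "j \<le> k"
    have "B (M m j) (\<delta> j) \<otimes>\<^bsub>H\<^esub> B (M m' j) (\<delta> j) = B (\<lambda>i. M m j i + M m' j i) (\<delta> j)"
      by (simp add: B_add1)
    also have "\<dots> = B (M (addA m m') j) (\<delta> j)"
    proof (rule B_dvd)
      show "j \<in> I" using j by simp
      fix i assume i: "i \<in> I"
      show "int (n j) dvd (M m j i + M m' j i - M (addA m m') j i)"
      proof (cases "i < j")
        case True
        then have "(i, j) \<in> P" using i j by (auto simp: P_def)
        then have "M (addA m m') j i = (M m j i + M m' j i) mod int (n j)"
          using True by (simp add: M_def addA_def)
        then show ?thesis by (simp add: mod_eq_dvd_iff[symmetric])
      next
        case False then show ?thesis by (simp add: M_def)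
      qed
    qed
    finally show "B (M m j) (\<delta> j) \<otimes>\<^bsub>H\<^esub> B (M m' j) (\<delta> j) = B (M (addA m m') j) (\<delta> j)" .
  qed
  finally show ?thesis .
qed

lemma Phi_zero: "\<Phi> zA = \<one>\<^bsub>H\<^esub>"
proof -
  have "\<Phi> zA = prodH H (\<lambda>j. \<one>\<^bsub>H\<^esub>) k"
    unfolding \<Phi>_def
  proof (rule prodH_cong)
    fix j assume j: "1 \<le> j" "j \<le> k"
    have "B (M zA j) (\<delta> j) = B (\<lambda>i. 0) (\<delta> j)"
      by (rule B_red1) (use j in \<open>auto simp: M_def zA_def P_def\<close>)
    then show "B (M zA j) (\<delta> j) = \<one>\<^bsub>H\<^esub>" by (simp add: B_zero1)
  qed
  then show ?thesis by (simp add: prodH_one)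
qed

lemma Phi_inv: "inv\<^bsub>H\<^esub> (\<Phi> m) = \<Phi> (negA m)"
  by (rule H.inv_equality) (simp_all add: Phi_mult addA_neg Phi_zero Phi_carrier)

lemma subgroup_Phi: "subgroup (\<Phi> ` A) H"
proof (rule H.subgroupI)
  show "\<Phi> ` A \<subseteq> carrier H" using Phi_carrier by blast
  show "\<Phi> ` A \<noteq> {}" using zA_A by blast
  fix a b assume "a \<in> \<Phi> ` A" "b \<in> \<Phi> ` A"
  then obtain m m' where "a = \<Phi> m" "b = \<Phi> m'" by blast
  then show "inv\<^bsub>H\<^esub> a \<in> \<Phi> ` A" "a \<otimes>\<^bsub>H\<^esub> b \<in> \<Phi> ` A"
    using Phi_inv Phi_mult negA_A addA_A by auto
qed

lemma derived_Phi: "derived H (carrier H) \<subseteq> \<Phi> ` A"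
  unfolding derived_def
proof (rule H.generate_subgroup_incl[OF _ subgroup_Phi])
  show "derived_set H (carrier H) \<subseteq> \<Phi> ` A"
  proof
    fix h assume "h \<in> derived_set H (carrier H)"
    then obtain a b where ab: "a \<in> carrier H" "b \<in> carrier H"
      "h = a \<otimes>\<^bsub>H\<^esub> b \<otimes>\<^bsub>H\<^esub> inv\<^bsub>H\<^esub> a \<otimes>\<^bsub>H\<^esub> inv\<^bsub>H\<^esub> b" by blast
    then have "h = C (\<pi> a) (\<pi> b)" by (simp add: cm_C[symmetric] cm_def)
    also have "\<dots> = \<Phi> (mm (\<pi> a) (\<pi> b))" using ab by (simp add: C_Phi hg.hom_closed)
    finally show "h \<in> \<Phi> ` A" using mm_A by blast
  qed
qed

lemma ker_Phi: "kernel H G \<pi> \<subseteq> \<Phi> ` A"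
  using kerc derived_Phi by blast

lemma finite_G: "finite (carrier G)"
  unfolding carrier_G by (intro finite_PiE) auto

lemma card_bound:
  assumes fin: "finite (carrier H)"
  shows "card (carrier H) \<le> card (carrier G) * card (\<Phi> ` A)"
proof -
  have sub: "carrier H \<subseteq> (\<lambda>(x,z). lift x \<otimes>\<^bsub>H\<^esub> z) ` (carrier G \<times> kernel H G \<pi>)"
  proof
    fix a assume a: "a \<in> carrier H"
    then have "(\<pi> a, inv\<^bsub>H\<^esub> (lift (\<pi> a)) \<otimes>\<^bsub>H\<^esub> a) \<in> carrier G \<times> kernel H G \<pi>"
      using decomp(2) hg.hom_closed by auto
    moreover have "a = (\<lambda>(x,z). lift x \<otimes>\<^bsub>H\<^esub> z) (\<pi> a, inv\<^bsub>H\<^esub> (lift (\<pi> a)) \<otimes>\<^bsub>H\<^esub> a)"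
      using decomp(1)[OF a] by simp
    ultimately show "a \<in> (\<lambda>(x,z). lift x \<otimes>\<^bsub>H\<^esub> z) ` (carrier G \<times> kernel H G \<pi>)" by blast
  qed
  have fk: "finite (kernel H G \<pi>)" using fin by (rule finite_subset[rotated]) (auto simp: kernel_def)
  have "card (carrier H) \<le> card ((\<lambda>(x,z). lift x \<otimes>\<^bsub>H\<^esub> z) ` (carrier G \<times> kernel H G \<pi>))"
    using sub fk finite_G by (intro card_mono) auto
  also have "\<dots> \<le> card (carrier G \<times> kernel H G \<pi>)" by (rule card_image_le) (use fk finite_G in auto)
  also have "\<dots> = card (carrier G) * card (kernel H G \<pi>)" by (rule card_cartesian_product)
  also have "\<dots> \<le> card (carrier G) * card (\<Phi> ` A)"
    using ker_Phi finite_A by (intro mult_le_mono2 card_mono) auto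
  finally show ?thesis .
qed

lemma Phi_inj:
  assumes fin: "finite (carrier H)" and big: "card (carrier G) * card A \<le> card (carrier H)"
  shows "inj_on \<Phi> A"
proof -
  have "card (carrier G) > 0" using finite_G Gp.one_closed by (metis card_gt_0_iff empty_iff)
  moreover have "card (carrier G) * card A \<le> card (carrier G) * card (\<Phi> ` A)"
    using big card_bound[OF fin] by linarith
  ultimately have "card A \<le> card (\<Phi> ` A)" by simp
  moreover have "card (\<Phi> ` A) \<le> card A" using finite_A by (rule card_image_le)
  ultimately show ?thesis using finite_A by (intro eq_card_imp_inj_on) auto
qed

lemma comm_cm: assumes "a \<in> carrier H" "b \<in> carrier H"
  shows "a \<otimes>\<^bsub>H\<^esub> b = b \<otimes>\<^bsub>H\<^esub> a \<longleftrightarrow> cm a b = \<one>\<^bsub>H\<^esub>"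
proof -
  have e: "cm a b = (a \<otimes>\<^bsub>H\<^esub> b) \<otimes>\<^bsub>H\<^esub> inv\<^bsub>H\<^esub> (b \<otimes>\<^bsub>H\<^esub> a)"
    using assms by (simp add: cm_def H.inv_mult_group H.m_assoc)
  show ?thesis
  proof
    assume "a \<otimes>\<^bsub>H\<^esub> b = b \<otimes>\<^bsub>H\<^esub> a" then show "cm a b = \<one>\<^bsub>H\<^esub>" using e assms by simp
  next
    assume "cm a b = \<one>\<^bsub>H\<^esub>"
    then have "inv\<^bsub>H\<^esub> (inv\<^bsub>H\<^esub> (b \<otimes>\<^bsub>H\<^esub> a)) = a \<otimes>\<^bsub>H\<^esub> b"
      using e assms by (intro H.inv_equality) auto
    then show "a \<otimes>\<^bsub>H\<^esub> b = b \<otimes>\<^bsub>H\<^esub> a" using assms by simp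
  qed
qed

lemma adj_iff:
  assumes fin: "finite (carrier H)" and big: "card (carrier G) * card A \<le> card (carrier H)"
    and x: "x \<in> carrier G" and y: "y \<in> carrier G"
  shows "(\<exists>a\<in>carrier H. \<exists>b\<in>carrier H. \<pi> a = x \<and> \<pi> b = y \<and> a \<otimes>\<^bsub>H\<^esub> b = b \<otimes>\<^bsub>H\<^esub> a) \<longleftrightarrow> Rel x y"
proof -
  have inj: "inj_on \<Phi> A" by (rule Phi_inj[OF fin big])
  have key: "C x y = \<one>\<^bsub>H\<^esub> \<longleftrightarrow> Rel x y"
  proof -
    have "C x y = \<one>\<^bsub>H\<^esub> \<longleftrightarrow> \<Phi> (mm x y) = \<Phi> zA" using x y by (simp add: C_Phi Phi_zero)
    also have "\<dots> \<longleftrightarrow> mm x y = zA" by (rule inj_on_eq_iff[OF inj mm_A zA_A])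
    finally show ?thesis by (simp add: mm_zA)
  qed
  show ?thesis
  proof
    assume "\<exists>a\<in>carrier H. \<exists>b\<in>carrier H. \<pi> a = x \<and> \<pi> b = y \<and> a \<otimes>\<^bsub>H\<^esub> b = b \<otimes>\<^bsub>H\<^esub> a"
    then obtain a b where ab: "a \<in> carrier H" "b \<in> carrier H" "\<pi> a = x" "\<pi> b = y" "a \<otimes>\<^bsub>H\<^esub> b = b \<otimes>\<^bsub>H\<^esub> a"
      by blast
    then have "cm a b = \<one>\<^bsub>H\<^esub>" using comm_cm by blast
    then have "C x y = \<one>\<^bsub>H\<^esub>" using cm_C[OF ab(1,2)] ab(3,4) by simp
    then show "Rel x y" using key by simp
  next
    assume "Rel x y"
    then have "cm (lift x) (lift y) = \<one>\<^bsub>H\<^esub>" using key by (simp add: C_def)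
    moreover have lx: "lift x \<in> carrier H" "\<pi> (lift x) = x" using lift[OF x] by auto
    moreover have ly: "lift y \<in> carrier H" "\<pi> (lift y) = y" using lift[OF y] by auto
    ultimately have "lift x \<otimes>\<^bsub>H\<^esub> lift y = lift y \<otimes>\<^bsub>H\<^esub> lift x" using comm_cm by blast
    then show "\<exists>a\<in>carrier H. \<exists>b\<in>carrier H. \<pi> a = x \<and> \<pi> b = y \<and> a \<otimes>\<^bsub>H\<^esub> b = b \<otimes>\<^bsub>H\<^esub> a"
      using lx ly by blast
  qed
qed

end

lemma mod_dvd_mult: fixes d e u v w :: int
  assumes "d dvd e" shows "((u mod e) * v + w) mod d = (u * v + w) mod d"
proof -
  have "e dvd (u mod e - u)" by (simp add: mod_eq_dvd_iff[symmetric])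
  then have "d dvd (u mod e - u) * v" using assms by (meson dvd_mult2 dvd_trans)
  then have "d dvd ((u mod e) * v + w) - (u * v + w)" by (simp add: algebra_simps)
  then show ?thesis by (simp add: mod_eq_dvd_iff)
qed

context ab begin

lemma mult_G_eq: "x \<otimes>\<^bsub>G\<^esub> y = (\<lambda>i\<in>I. (x i + y i) mod int (n i))"
  by (simp add: mult_product_group)

lemma one_G_eq: "\<one>\<^bsub>G\<^esub> = (\<lambda>i\<in>I. 0)"
  by (simp add: one_product_group)

lemma P_dvd: "(i,j) \<in> P \<Longrightarrow> int (n j) dvd int (n i)"
  using n_dvd by (auto simp: P_def)

lemma P_I: "(i,j) \<in> P \<Longrightarrow> i \<in> I \<and> j \<in> I"
  by (auto simp: P_def)

definition mulK :: "((nat \<Rightarrow> int) \<times> (nat \<times> nat \<Rightarrow> int)) \<Rightarrow> ((nat \<Rightarrow> int) \<times> (nat \<times> nat \<Rightarrow> int))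
   \<Rightarrow> ((nat \<Rightarrow> int) \<times> (nat \<times> nat \<Rightarrow> int))" where
  "mulK u v = (fst u \<otimes>\<^bsub>G\<^esub> fst v,
     (\<lambda>q\<in>P. (snd u q + snd v q + fst u (fst q) * fst v (snd q)) mod int (n (snd q))))"

definition K :: "((nat \<Rightarrow> int) \<times> (nat \<times> nat \<Rightarrow> int)) monoid" where
  "K = \<lparr>carrier = carrier G \<times> A, monoid.mult = mulK, one = (\<one>\<^bsub>G\<^esub>, zA)\<rparr>"

lemma K_simps: "carrier K = carrier G \<times> A" "monoid.mult K = mulK" "one K = (\<one>\<^bsub>G\<^esub>, zA)"
  by (simp_all add: K_def)

lemma A_mem: "a \<in> A \<Longrightarrow> q \<in> P \<Longrightarrow> 0 \<le> a q \<and> a q < int (n (snd q))"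
  by (auto simp: A_def PiE_iff)

lemma A_ext: "a \<in> A \<Longrightarrow> q \<notin> P \<Longrightarrow> a q = undefined"
  by (cases q) (auto simp: A_def PiE_def extensional_def)

lemma G_mem: "x \<in> carrier G \<Longrightarrow> i \<in> I \<Longrightarrow> 0 \<le> x i \<and> x i < int (n i)"
  by (auto simp: carrier_G PiE_iff)

lemma mulK_closed: "u \<in> carrier K \<Longrightarrow> v \<in> carrier K \<Longrightarrow> mulK u v \<in> carrier K"
  using P_n by (auto simp: K_simps mulK_def A_def PiE_iff)

lemma group_K: "group K"
proof (rule groupI)
  show "x \<otimes>\<^bsub>K\<^esub> y \<in> carrier K" if "x \<in> carrier K" "y \<in> carrier K" for x y
    using mulK_closed that by (simp add: K_simps)
  show "\<one>\<^bsub>K\<^esub> \<in> carrier K" using zA_A by (simp add: K_simps)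
next
  fix u v w assume uvw: "u \<in> carrier K" "v \<in> carrier K" "w \<in> carrier K"
  obtain x a y b z c where e: "u = (x,a)" "v = (y,b)" "w = (z,c)" by (cases u, cases v, cases w) auto
  have xyz: "x \<in> carrier G" "y \<in> carrier G" "z \<in> carrier G" using uvw e by (auto simp: K_simps)
  have 1: "x \<otimes>\<^bsub>G\<^esub> y \<otimes>\<^bsub>G\<^esub> z = x \<otimes>\<^bsub>G\<^esub> (y \<otimes>\<^bsub>G\<^esub> z)" using xyz by (rule Gp.m_assoc)
  have 2: "(\<lambda>q\<in>P. ((\<lambda>q\<in>P. (a q + b q + x (fst q) * y (snd q)) mod int (n (snd q))) q + c q
              + (x \<otimes>\<^bsub>G\<^esub> y) (fst q) * z (snd q)) mod int (n (snd q)))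
         = (\<lambda>q\<in>P. (a q + (\<lambda>q\<in>P. (b q + c q + y (fst q) * z (snd q)) mod int (n (snd q))) q
              + x (fst q) * (y \<otimes>\<^bsub>G\<^esub> z) (snd q)) mod int (n (snd q)))"
  proof (rule restrict_ext)
    fix q assume q: "q \<in> P"
    then obtain i j where ij: "q = (i,j)" by (cases q) auto
    have d: "int (n j) dvd int (n i)" and I: "i \<in> I" "j \<in> I" using q ij P_dvd P_I by auto
    have "((a q + b q + x i * y j) mod int (n j) + c q + ((x i + y i) mod int (n i)) * z j) mod int (n j)
        = (a q + b q + x i * y j + c q + (x i + y i) * z j) mod int (n j)"
    proof -
      have s1: "\<And>W. (W + ((x i + y i) mod int (n i)) * z j) mod int (n j) = (W + (x i + y i) * z j) mod int (n j)"
        by (metis add.commute mod_dvd_mult[OF d])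
      show ?thesis by (simp only: s1) (simp add: add.assoc mod_add_left_eq)
    qed
    also have "\<dots> = (a q + (b q + c q + y i * z j) mod int (n j) + x i * ((y j + z j) mod int (n j))) mod int (n j)"
    proof -
      define S where "S = b q + c q + y i * z j"
      define T where "T = y j + z j"
      have d: "int (n j) dvd (S - S mod int (n j)) + x i * (T - T mod int (n j))"
        by (intro dvd_add dvd_mult) (simp_all add: dvd_minus_mod)
      have e: "(a q + b q + x i * y j + c q + (x i + y i) * z j) - (a q + S mod int (n j) + x i * (T mod int (n j)))
          = (S - S mod int (n j)) + x i * (T - T mod int (n j))"
        by (simp add: S_def T_def algebra_simps)
      have "int (n j) dvd (a q + b q + x i * y j + c q + (x i + y i) * z j) - (a q + S mod int (n j) + x i * (T mod int (n j)))"
        unfolding e by (rule d)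
      then have "(a q + b q + x i * y j + c q + (x i + y i) * z j) mod int (n j) = (a q + S mod int (n j) + x i * (T mod int (n j))) mod int (n j)"
        by (simp only: mod_eq_dvd_iff)
      then show ?thesis by (simp only: S_def T_def)
    qed
    finally show "((\<lambda>q\<in>P. (a q + b q + x (fst q) * y (snd q)) mod int (n (snd q))) q + c q
              + (x \<otimes>\<^bsub>G\<^esub> y) (fst q) * z (snd q)) mod int (n (snd q))
         = (a q + (\<lambda>q\<in>P. (b q + c q + y (fst q) * z (snd q)) mod int (n (snd q))) q
              + x (fst q) * (y \<otimes>\<^bsub>G\<^esub> z) (snd q)) mod int (n (snd q))"
      using q ij I by (simp add: mult_G_eq)
  qed
  show "u \<otimes>\<^bsub>K\<^esub> v \<otimes>\<^bsub>K\<^esub> w = u \<otimes>\<^bsub>K\<^esub> (v \<otimes>\<^bsub>K\<^esub> w)"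
    using 1 2 by (simp add: K_simps mulK_def e)
next
  fix u assume u: "u \<in> carrier K"
  obtain x a where e: "u = (x,a)" by (cases u) auto
  have xa: "x \<in> carrier G" "a \<in> A" using u e by (auto simp: K_simps)
  have "(\<lambda>q\<in>P. (zA q + a q + \<one>\<^bsub>G\<^esub> (fst q) * x (snd q)) mod int (n (snd q))) = a"
  proof
    fix q show "(\<lambda>q\<in>P. (zA q + a q + \<one>\<^bsub>G\<^esub> (fst q) * x (snd q)) mod int (n (snd q))) q = a q"
    proof (cases "q \<in> P")
      case True
      then obtain i j where ij: "q = (i,j)" by (cases q) auto
      then have "i \<in> I" using True P_I by blast
      then show ?thesis using True ij A_mem[OF xa(2) True] by (simp add: zA_def one_G_eq)
    next
      case False then show ?thesis using A_ext[OF xa(2)] by simp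
    qed
  qed
  then show "\<one>\<^bsub>K\<^esub> \<otimes>\<^bsub>K\<^esub> u = u" using xa by (simp add: K_simps mulK_def e)
next
  fix u assume u: "u \<in> carrier K"
  obtain x a where e: "u = (x,a)" by (cases u) auto
  have xa: "x \<in> carrier G" "a \<in> A" using u e by (auto simp: K_simps)
  define y where "y = inv\<^bsub>G\<^esub> x"
  define b where "b = (\<lambda>q\<in>P. (- a q - y (fst q) * x (snd q)) mod int (n (snd q)))"
  have yb: "(y, b) \<in> carrier K" using xa P_n by (auto simp: K_simps y_def b_def A_def PiE_iff)
  have "mulK (y,b) (x,a) = (\<one>\<^bsub>G\<^esub>, zA)"
    using xa by (auto simp: mulK_def y_def b_def zA_def fun_eq_iff add.assoc mod_add_left_eq)
  then show "\<exists>v\<in>carrier K. v \<otimes>\<^bsub>K\<^esub> u = \<one>\<^bsub>K\<^esub>" using yb by (auto simp: K_simps e)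
qed

end

context ab begin

lemma n_gt1: "1 \<le> i \<Longrightarrow> i \<le> k \<Longrightarrow> 1 < n i" using n_ge[of i] by simp
lemma n_gt1': "1 \<le> i \<Longrightarrow> i \<le> k \<Longrightarrow> 1 < int (n i)" using n_ge[of i] by simp
lemma n_gt0: "1 \<le> i \<Longrightarrow> i \<le> k \<Longrightarrow> 0 < n i" using n_ge[of i] by simp
lemma one_mod: "1 \<le> i \<Longrightarrow> i \<le> k \<Longrightarrow> 1 mod int (n i) = 1" using n_gt1'[of i] by simp

definition eI :: "nat \<Rightarrow> (nat \<Rightarrow> int)" where
  "eI i = (\<lambda>t\<in>I. if t = i then 1 else 0)"
definition uq :: "nat \<times> nat \<Rightarrow> (nat \<times> nat \<Rightarrow> int)" where
  "uq q = (\<lambda>q'\<in>P. if q' = q then 1 else 0)"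

lemma eI_G: "i \<in> I \<Longrightarrow> eI i \<in> carrier G"
  by (auto simp: eI_def carrier_G PiE_iff n_gt1 n_gt0)

lemma uq_A: "uq q \<in> A"
  unfolding uq_def A_def by (auto simp: PiE_iff P_def n_gt1 n_gt0)

lemma hom_fst: "fst \<in> hom K G"
  by (auto simp: hom_def K_simps mulK_def)

lemma surj_fst: "fst ` carrier K = carrier G"
  using zA_A by (force simp: K_simps)

lemma center_K: assumes a: "a \<in> A" shows "(\<one>\<^bsub>G\<^esub>, a) \<in> group_center K"
proof -
  have "mulK (\<one>\<^bsub>G\<^esub>, a) h = mulK h (\<one>\<^bsub>G\<^esub>, a)" if h: "h \<in> carrier K" for h
  proof -
    obtain y b where e: "h = (y,b)" by (cases h) auto
    have y: "y \<in> carrier G" using h e by (simp add: K_simps)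
    have "(\<lambda>q\<in>P. (a q + b q + \<one>\<^bsub>G\<^esub> (fst q) * y (snd q)) mod int (n (snd q)))
        = (\<lambda>q\<in>P. (b q + a q + y (fst q) * \<one>\<^bsub>G\<^esub> (snd q)) mod int (n (snd q)))"
      by (rule restrict_ext) (auto simp: one_G_eq P_def add.commute)
    then show ?thesis using y by (simp add: mulK_def e Gp.m_comm)
  qed
  then show ?thesis using a by (auto simp: group_center_def K_simps)
qed

lemma comm_unit:
  assumes q: "(i,j) \<in> P"
  shows "(\<one>\<^bsub>G\<^esub>, uq (i,j)) \<in> derived K (carrier K)"
proof -
  interpret Kg: group K by (rule group_K)
  have ij: "i \<in> I" "j \<in> I" "i < j" using q by (auto simp: P_def)
  define a where "a = (eI i, zA)"
  define b where "b = (eI j, zA)"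
  define z where "z = (\<one>\<^bsub>G\<^esub>, uq (i,j))"
  have ab: "a \<in> carrier K" "b \<in> carrier K" "z \<in> carrier K"
    using eI_G ij zA_A uq_A by (auto simp: a_def b_def z_def K_simps)
  have e1: "mulK a b = (eI i \<otimes>\<^bsub>G\<^esub> eI j, uq (i,j))"
    by (auto simp: mulK_def a_def b_def uq_def zA_def eI_def fun_eq_iff P_def one_mod)
  have e2: "mulK b a = (eI j \<otimes>\<^bsub>G\<^esub> eI i, zA)"
    using ij by (auto simp: mulK_def a_def b_def zA_def eI_def fun_eq_iff P_def)
  have e3: "mulK z (eI j \<otimes>\<^bsub>G\<^esub> eI i, zA) = (eI j \<otimes>\<^bsub>G\<^esub> eI i, uq (i,j))"
  proof -
    have X: "eI j \<otimes>\<^bsub>G\<^esub> eI i \<in> carrier G" using eI_G ij by simp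
    show ?thesis
      by (simp add: mulK_def z_def Gp.l_one[OF X]) (auto simp: fun_eq_iff uq_def zA_def one_G_eq P_def one_mod)
  qed
  have abz: "a \<otimes>\<^bsub>K\<^esub> b = z \<otimes>\<^bsub>K\<^esub> (b \<otimes>\<^bsub>K\<^esub> a)"
    using e1 e2 e3 eI_G ij by (simp add: K_simps Gp.m_comm)
  have "a \<otimes>\<^bsub>K\<^esub> b \<otimes>\<^bsub>K\<^esub> inv\<^bsub>K\<^esub> a \<otimes>\<^bsub>K\<^esub> inv\<^bsub>K\<^esub> b = z"
    using ab by (simp add: abz Kg.m_assoc)
  then have "z \<in> derived_set K (carrier K)" using ab by blast
  then show ?thesis unfolding derived_def z_def[symmetric] by (rule generate.incl)
qed

lemma all_derived:
  assumes "a \<in> A" shows "(\<one>\<^bsub>G\<^esub>, a) \<in> derived K (carrier K)"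
proof -
  interpret Kg: group K by (rule group_K)
  have sg: "subgroup (derived K (carrier K)) K" by (rule Kg.derived_is_subgroup) simp
  have "\<forall>a. a \<in> A \<longrightarrow> nat (sum a P) = N \<longrightarrow> (\<one>\<^bsub>G\<^esub>, a) \<in> derived K (carrier K)" for N
  proof (induction N rule: less_induct)
    case (less N)
    show ?case
    proof (intro allI impI)
      fix a assume a: "a \<in> A" and N: "nat (sum a P) = N"
      show "(\<one>\<^bsub>G\<^esub>, a) \<in> derived K (carrier K)"
      proof (cases "\<forall>q\<in>P. a q = 0")
        case True
        then have "a = zA" using A_ext[OF a] by (auto simp: zA_def fun_eq_iff)
        then show ?thesis using subgroup.one_closed[OF sg] by (simp add: K_simps)
      next
        case False
        then obtain q where q: "q \<in> P" "a q \<noteq> 0" by blast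
        then have aq: "a q > 0" "a q < int (n (snd q))" using A_mem[OF a q(1)] by auto
        define a' where "a' = a(q := a q - 1)"
        have a'A: "a' \<in> A" using a aq q unfolding a'_def A_def by (auto simp: PiE_iff extensional_def)
        have s: "sum a P = a q + sum a (P - {q})" using q finite_P by (simp add: sum.remove)
        have s': "sum a' P = a' q + sum a' (P - {q})" using q finite_P by (simp add: sum.remove)
        have s'': "sum a' (P - {q}) = sum a (P - {q})" by (rule sum.cong) (auto simp: a'_def)
        have pos: "sum a (P - {q}) \<ge> 0" using A_mem[OF a] by (intro sum_nonneg) auto
        have lt: "nat (sum a' P) < N" using s s' s'' aq N pos by (simp add: a'_def)
        have IH: "(\<one>\<^bsub>G\<^esub>, a') \<in> derived K (carrier K)" using less.IH[OF lt] a'A by blast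
        obtain i j where ij: "q = (i,j)" by (cases q) auto
        have U: "(\<one>\<^bsub>G\<^esub>, uq q) \<in> derived K (carrier K)" using comm_unit q(1) ij by simp
        have "mulK (\<one>\<^bsub>G\<^esub>, a') (\<one>\<^bsub>G\<^esub>, uq q) = (\<one>\<^bsub>G\<^esub>, a)"
        proof -
          have "(\<lambda>q'\<in>P. (a' q' + uq q q' + \<one>\<^bsub>G\<^esub> (fst q') * \<one>\<^bsub>G\<^esub> (snd q')) mod int (n (snd q'))) = a"
          proof
            fix q' show "(\<lambda>q'\<in>P. (a' q' + uq q q' + \<one>\<^bsub>G\<^esub> (fst q') * \<one>\<^bsub>G\<^esub> (snd q')) mod int (n (snd q'))) q' = a q'"
            proof (cases "q' \<in> P")
              case True
              then have "fst q' \<in> I" by (auto simp: P_def)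
              then show ?thesis using True A_mem[OF a True] aq
                by (auto simp: a'_def uq_def one_G_eq)
            next
              case False then show ?thesis using A_ext[OF a] by simp
            qed
          qed
          then show ?thesis by (simp add: mulK_def)
        qed
        then have "(\<one>\<^bsub>G\<^esub>, a) = (\<one>\<^bsub>G\<^esub>, a') \<otimes>\<^bsub>K\<^esub> (\<one>\<^bsub>G\<^esub>, uq q)" by (simp add: K_simps)
        then show ?thesis using subgroup.m_closed[OF sg IH U] by simp
      qed
    qed
  qed
  then show ?thesis using assms by blast
qed

lemma stem_K: "stem_extension K G fst"
  unfolding stem_extension_def
proof (intro conjI)
  show "group K" by (rule group_K)
  show "group G" by simp
  show "fst \<in> hom K G" by (rule hom_fst)
  show "fst ` carrier K = carrier G" by (rule surj_fst)
  show "kernel K G fst \<subseteq> group_center K \<inter> derived K (carrier K)"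
  proof
    fix u assume "u \<in> kernel K G fst"
    then obtain a where "u = (\<one>\<^bsub>G\<^esub>, a)" "a \<in> A" by (cases u) (auto simp: kernel_def K_simps)
    then show "u \<in> group_center K \<inter> derived K (carrier K)" using center_K all_derived by simp
  qed
qed

lemma card_K: "card (carrier K) = card (carrier G) * card A"
  by (simp add: K_simps card_cartesian_product)

lemma finite_K: "finite (carrier K)"
proof -
  have "finite (carrier G)" unfolding carrier_G by (intro finite_PiE) auto
  then show ?thesis using finite_A by (simp add: K_simps)
qed

end

lemma transport:
  fixes K :: "'c monoid" and G0 :: "('b,'d) monoid_scheme" and \<pi>0 :: "'c \<Rightarrow> 'b"
  assumes st: "stem_extension K G0 \<pi>0" and fin: "finite (carrier K)"
  shows "\<exists>(T :: nat monoid) \<pi>'. finite (carrier T) \<and> stem_extension T G0 \<pi>' \<and> card (carrier T) = card (carrier K)"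
proof -
  have gK: "group K" and gG: "group G0" and hK: "\<pi>0 \<in> hom K G0" and sK: "\<pi>0 ` carrier K = carrier G0"
    and kK: "kernel K G0 \<pi>0 \<subseteq> group_center K \<inter> derived K (carrier K)"
    using st by (auto simp: stem_extension_def)
  interpret Kg: group K by (rule gK)
  obtain f :: "'c \<Rightarrow> nat" where bij: "bij_betw f (carrier K) {0..<card (carrier K)}"
    using ex_bij_betw_finite_nat[OF fin] by blast
  have inj: "inj_on f (carrier K)" using bij by (simp add: bij_betw_def)
  define g where "g = inv_into (carrier K) f"
  have gf: "\<And>x. x \<in> carrier K \<Longrightarrow> g (f x) = x" using inj by (simp add: g_def)
  have fg: "\<And>a. a \<in> f ` carrier K \<Longrightarrow> f (g a) = a" by (simp add: g_def f_inv_into_f)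
  have gin: "\<And>a. a \<in> f ` carrier K \<Longrightarrow> g a \<in> carrier K" by (simp add: g_def inv_into_into)
  define T :: "nat monoid" where
    "T = \<lparr>carrier = f ` carrier K, monoid.mult = (\<lambda>a b. f (g a \<otimes>\<^bsub>K\<^esub> g b)), one = f \<one>\<^bsub>K\<^esub>\<rparr>"
  have T: "carrier T = f ` carrier K" "\<And>a b. a \<otimes>\<^bsub>T\<^esub> b = f (g a \<otimes>\<^bsub>K\<^esub> g b)" "\<one>\<^bsub>T\<^esub> = f \<one>\<^bsub>K\<^esub>"
    by (simp_all add: T_def)
  have gT: "group T"
  proof (rule groupI)
    show "x \<otimes>\<^bsub>T\<^esub> y \<in> carrier T" if "x \<in> carrier T" "y \<in> carrier T" for x y
      using that by (simp add: T gin)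
    show "\<one>\<^bsub>T\<^esub> \<in> carrier T" by (simp add: T)
    show "x \<otimes>\<^bsub>T\<^esub> y \<otimes>\<^bsub>T\<^esub> z = x \<otimes>\<^bsub>T\<^esub> (y \<otimes>\<^bsub>T\<^esub> z)"
      if "x \<in> carrier T" "y \<in> carrier T" "z \<in> carrier T" for x y z
      using that by (simp add: T gin gf Kg.m_assoc)
    show "\<one>\<^bsub>T\<^esub> \<otimes>\<^bsub>T\<^esub> x = x" if "x \<in> carrier T" for x
      using that by (simp add: T gin gf fg)
    show "\<exists>y\<in>carrier T. y \<otimes>\<^bsub>T\<^esub> x = \<one>\<^bsub>T\<^esub>" if "x \<in> carrier T" for x
    proof
      show "f (inv\<^bsub>K\<^esub> (g x)) \<in> carrier T" using that by (simp add: T gin)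
      show "f (inv\<^bsub>K\<^esub> (g x)) \<otimes>\<^bsub>T\<^esub> x = \<one>\<^bsub>T\<^esub>" using that by (simp add: T gin gf)
    qed
  qed
  interpret Tg: group T by (rule gT)
  have hf: "f \<in> hom K T" by (auto simp: hom_def T gf)
  interpret fh: group_hom K T f by (simp add: group_hom_def group_hom_axioms_def gK gT hf)
  have der: "derived T (carrier T) = f ` derived K (carrier K)"
    using fh.derived_img[of "carrier K"] by (simp add: T)
  define \<pi>' where "\<pi>' = (\<lambda>a. \<pi>0 (g a))"
  have "stem_extension T G0 \<pi>'"
    unfolding stem_extension_def
  proof (intro conjI)
    show "group T" by (rule gT)
    show "group G0" by (rule gG)
    show "\<pi>' \<in> hom T G0"
    proof (rule homI)
      fix x assume "x \<in> carrier T"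
      then have "g x \<in> carrier K" by (simp add: T gin)
      then show "\<pi>' x \<in> carrier G0" unfolding \<pi>'_def by (rule hom_in_carrier[OF hK])
    next
      fix x y assume xy: "x \<in> carrier T" "y \<in> carrier T"
      then have gxy: "g x \<in> carrier K" "g y \<in> carrier K" by (simp_all add: T gin)
      have "\<pi>' (x \<otimes>\<^bsub>T\<^esub> y) = \<pi>0 (g x \<otimes>\<^bsub>K\<^esub> g y)"
        unfolding \<pi>'_def T(2) gf[OF Kg.m_closed[OF gxy]] ..
      also have "\<dots> = \<pi>' x \<otimes>\<^bsub>G0\<^esub> \<pi>' y" unfolding \<pi>'_def by (rule hom_mult[OF hK gxy])
      finally show "\<pi>' (x \<otimes>\<^bsub>T\<^esub> y) = \<pi>' x \<otimes>\<^bsub>G0\<^esub> \<pi>' y" .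
    qed
    show "\<pi>' ` carrier T = carrier G0"
    proof -
      have "g ` f ` carrier K = carrier K" using gf by force
      then have "\<pi>' ` carrier T = \<pi>0 ` carrier K" by (simp add: T \<pi>'_def image_image[symmetric])
      then show ?thesis using sK by simp
    qed
    show "kernel T G0 \<pi>' \<subseteq> group_center T \<inter> derived T (carrier T)"
    proof
      fix a assume a: "a \<in> kernel T G0 \<pi>'"
      then have aT: "a \<in> f ` carrier K" and "\<pi>0 (g a) = \<one>\<^bsub>G0\<^esub>" by (auto simp: kernel_def T \<pi>'_def)
      then have "g a \<in> kernel K G0 \<pi>0" using gin by (simp add: kernel_def)
      then have ga: "g a \<in> group_center K" "g a \<in> derived K (carrier K)" using kK by auto
      have "a \<in> group_center T"
        unfolding group_center_def
      proof (intro CollectI conjI ballI)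
        show "a \<in> carrier T" using aT by (simp add: T)
        fix h assume "h \<in> carrier T"
        then have "g h \<in> carrier K" by (simp add: T gin)
        then have "g a \<otimes>\<^bsub>K\<^esub> g h = g h \<otimes>\<^bsub>K\<^esub> g a" using ga(1) by (simp add: group_center_def)
        then show "a \<otimes>\<^bsub>T\<^esub> h = h \<otimes>\<^bsub>T\<^esub> a" by (simp add: T)
      qed
      moreover have "a \<in> derived T (carrier T)"
      proof -
        have "f (g a) \<in> f ` derived K (carrier K)" using ga(2) by (rule imageI)
        then show ?thesis using fg[OF aT] der by simp
      qed
      ultimately show "a \<in> group_center T \<inter> derived T (carrier T)" by blast
    qed
  qed
  moreover have "card (carrier T) = card (carrier K)" using inj by (simp add: T card_image)
  moreover have "finite (carrier T)" using fin by (simp add: T)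
  ultimately show ?thesis by blast
qed

context ab begin

lemma schur_big:
  assumes "schur_cover H G \<pi>"
  shows "card (carrier G) * card A \<le> card (carrier H)"
proof -
  obtain T :: "nat monoid" and \<pi>' where T: "finite (carrier T)" "stem_extension T G \<pi>'"
    "card (carrier T) = card (carrier K)"
    using transport[OF stem_K finite_K] by blast
  have "\<forall>(H' :: nat monoid) \<pi>'. finite (carrier H') \<and> stem_extension H' G \<pi>'
        \<longrightarrow> card (carrier H') \<le> card (carrier H)"
    using assms unfolding schur_cover_def by blast
  then have "card (carrier T) \<le> card (carrier H)" using T(1,2) by blast
  then show ?thesis using T(3) card_K by simp
qed

end

locale gr =
  fixes p k :: nat and r :: "nat \<Rightarrow> nat"
  assumes prime_p: "Factorial_Ring.prime p" and k2: "k \<ge> 2" and rpos: "\<forall>i \<in> {1..k}. r i \<ge> 1"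
    and rmono: "\<forall>i j. 1 \<le> i \<longrightarrow> i \<le> j \<longrightarrow> j \<le> k \<longrightarrow> r j \<le> r i"
begin

lemma p2: "p \<ge> 2" using prime_p by (simp add: prime_ge_2_nat)

sublocale ab k "\<lambda>i. p ^ r i"
proof
  fix i assume "i \<in> {1..k}"
  then have "r i \<ge> 1" using rpos by auto
  then have "p ^ r i \<ge> p ^ 1" using p2 by (intro power_increasing) auto
  then show "p ^ r i \<ge> 2" using p2 by simp
next
  fix i j assume "1 \<le> i" "i \<le> j" "j \<le> k"
  then have "r j \<le> r i" using rmono by blast
  then show "p ^ r j dvd p ^ r i" by (rule le_imp_power_dvd)
qed

definition E :: "(nat \<Rightarrow> int) \<Rightarrow> (nat \<Rightarrow> int) \<Rightarrow> bool" where
  "E x y \<longleftrightarrow> x \<in> carrier G \<and> y \<in> carrier G \<and> x \<noteq> y \<and> Rel x y"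

abbreviation "W \<equiv> reduced_vertices (carrier G) E"
abbreviation "R \<equiv> {(a, b). a \<in> W \<and> b \<in> W \<and> E a b}"

lemma Rel_refl: "Rel x x" by (simp add: Rel_def)

lemma Rel_sym: "Rel x y \<Longrightarrow> Rel y x"
  unfolding Rel_def by (metis dvd_minus_iff minus_diff_eq mult.commute)

lemma dominant_iff: "dominant (carrier G) E v \<longleftrightarrow> v \<in> carrier G \<and> (\<forall>w\<in>carrier G. Rel v w)"
  unfolding dominant_def E_def using Rel_refl by metis

lemma W_iff: "v \<in> W \<longleftrightarrow> v \<in> carrier G \<and> (\<exists>w\<in>carrier G. \<not> Rel v w)"
  unfolding reduced_vertices_def dominant_iff by blast

lemma R_sym: "(a, b) \<in> R \<Longrightarrow> (b, a) \<in> R"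
  by (auto simp: E_def Rel_sym)

lemma rt_sym: assumes "(a, b) \<in> R\<^sup>*" shows "(b, a) \<in> R\<^sup>*"
  using assms
proof (induction rule: rtrancl_induct)
  case base then show ?case by simp
next
  case (step y z)
  then have "(z, y) \<in> R" using R_sym by blast
  then show ?case using step.IH by (rule converse_rtrancl_into_rtrancl)
qed

lemma edge_or_eq: "a \<in> W \<Longrightarrow> b \<in> W \<Longrightarrow> Rel a b \<Longrightarrow> (a, b) \<in> R\<^sup>*"
proof (cases "a = b")
  case False
  assume "a \<in> W" "b \<in> W" "Rel a b"
  then have "(a, b) \<in> R" using False by (auto simp: E_def reduced_vertices_def)
  then show ?thesis by blast
qed simp

lemma eI_val: "t \<in> I \<Longrightarrow> eI i t = (if t = i then 1 else 0)"
  by (simp add: eI_def)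

lemma r_le1: "j \<in> I \<Longrightarrow> r j \<le> r 1" using rmono by auto

end

context gr begin

lemma prime_int: "Factorial_Ring.prime (int p)" using prime_p by simp

lemma dir1:
  assumes r2: "r 2 = 1"
  shows "induced_disconnected W E"
proof -
  have I12: "1 \<in> I" "2 \<in> I" using k2 by auto
  have nj: "r j = 1" if "2 \<le> j" "j \<le> k" for j
    using rmono rpos that r2 by (metis atLeastAtMost_iff le_antisym one_le_numeral order_trans)
  define u where "u = eI 1"
  define w where "w = eI 2"
  have uV: "u \<in> carrier G" "w \<in> carrier G" using eI_G I12 by (auto simp: u_def w_def)
  have uw: "u 1 = 1" "u 2 = 0" "w 1 = 0" "w 2 = 1" using I12 by (auto simp: u_def w_def eI_val)
  have nuw: "\<not> Rel u w"
  proof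
    assume "Rel u w"
    then have "int (p ^ r 2) dvd (u 1 * w 2 - u 2 * w 1)" using k2 unfolding Rel_def by auto
    then have "int p dvd 1" using uw r2 by simp
    then show False using p2 by simp
  qed
  have uW: "u \<in> W" using uV nuw by (auto simp: W_iff)
  have wW: "w \<in> W" using uV nuw Rel_sym by (auto simp: W_iff)
  define Q where "Q z \<longleftrightarrow> (\<forall>j. 2 \<le> j \<longrightarrow> j \<le> k \<longrightarrow> int p dvd z j)" for z :: "nat \<Rightarrow> int"
  have "Q z" if "(u, z) \<in> R\<^sup>*" for z
    using that
  proof (induction rule: rtrancl_induct)
    case base
    show ?case unfolding Q_def u_def by (auto simp: eI_val)
  next
    case (step y z)
    have yW: "y \<in> W" and Ryz: "Rel y z" using step.hyps(2) by (auto simp: E_def)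
    have Qy: "Q y" by (rule step.IH)
    have ny1: "\<not> int p dvd y 1"
    proof
      assume py: "int p dvd y 1"
      have py': "int p dvd y i" if "1 \<le> i" "i \<le> k" for i
        using Qy py that unfolding Q_def by (cases "i = 1") auto
      have "Rel y v" for v
        unfolding Rel_def
      proof (intro allI impI)
        fix i j assume ij: "1 \<le> (i::nat)" "i < j" "j \<le> k"
        then have "r j = 1" using nj by simp
        moreover have "int p dvd y i * v j - y j * v i" using py' ij by simp
        ultimately show "int (p ^ r j) dvd y i * v j - y j * v i" by simp
      qed
      then show False using yW by (auto simp: W_iff)
    qed
    show ?case unfolding Q_def
    proof (intro allI impI)
      fix j assume j: "2 \<le> j" "j \<le> k"
      have "int (p ^ r j) dvd y 1 * z j - y j * z 1" using Ryz j unfolding Rel_def by auto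
      then have d: "int p dvd y 1 * z j - y j * z 1" using nj[OF j] by simp
      have "int p dvd y j * z 1" using Qy j unfolding Q_def by simp
      then have "int p dvd y 1 * z j" using d by (metis dvd_add_left_iff diff_add_cancel)
      then show "int p dvd z j" using ny1 prime_int by (simp add: prime_dvd_mult_iff)
    qed
  qed
  moreover have "\<not> Q w" unfolding Q_def using uw k2 p2 by auto
  ultimately have "(u, w) \<notin> R\<^sup>*" by blast
  then show ?thesis unfolding induced_disconnected_def using uW wW by blast
qed

lemma G_range: "x \<in> carrier G \<Longrightarrow> i \<in> I \<Longrightarrow> 0 \<le> x i \<and> x i < int p ^ r i"
  using G_mem[of x i] by simp

lemma dvd_red:
  assumes "i \<in> I"
  shows "\<exists>c. red f i = f i - int p ^ r i * c"
proof -
  have "red f i = f i mod int (p ^ r i)" using assms by (simp add: red_def)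
  also have "\<dots> = f i - int p ^ r i * (f i div int p ^ r i)"
    by (simp add: minus_div_mult_eq_mod[symmetric] mult.commute)
  finally show ?thesis by blast
qed

lemma dir2:
  assumes r2: "r 2 \<ge> 2"
  shows "\<not> induced_disconnected W E"
proof -
  have I12: "1 \<in> I" "2 \<in> I" using k2 by auto
  have r21: "r 2 \<le> r 1" using rmono k2 by auto
  define s where "s = (\<lambda>t\<in>I. if t = 1 then int p ^ (r 2 - 1) else 0)"
  have sV: "s \<in> carrier G"
  proof -
    have "int p ^ (r 2 - 1) < int p ^ r 1"
      using p2 r2 r21 by (intro power_strict_increasing) auto
    then show ?thesis unfolding s_def carrier_G using p2 by (auto simp: PiE_iff)
  qed
  have s1: "s 1 = int p ^ (r 2 - 1)" and s0: "\<And>t. t \<in> I \<Longrightarrow> t \<noteq> 1 \<Longrightarrow> s t = 0"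
    using I12 by (auto simp: s_def)
  have sW: "s \<in> W"
  proof -
    have "\<not> Rel s (eI 2)"
    proof
      assume "Rel s (eI 2)"
      then have "int (p ^ r 2) dvd s 1 * eI 2 2 - s 2 * eI 2 1" using k2 unfolding Rel_def by auto
      then have d: "int p ^ r 2 dvd int p ^ (r 2 - 1)" using I12 s1 s0 by (simp add: eI_val)
      have "int p ^ (r 2 - 1) < int p ^ r 2" using p2 r2 by (intro power_strict_increasing) auto
      moreover have "int p ^ (r 2 - 1) > 0" using p2 by simp
      ultimately show False using d by (meson zdvd_imp_le not_less)
    qed
    then show ?thesis using sV eI_G I12 by (auto simp: W_iff)
  qed
  have main: "\<forall>x\<in>W. (\<forall>i\<in>I. int p ^ r i dvd int p ^ a * x i) \<longrightarrow> (x, s) \<in> R\<^sup>*" for a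
  proof (induction a)
    case 0
    show ?case
    proof (intro ballI impI)
      fix x assume xW: "x \<in> W" and d: "\<forall>i\<in>I. int p ^ r i dvd int p ^ 0 * x i"
      have xV: "x \<in> carrier G" using xW by (simp add: W_iff)
      have x0: "x i = 0" if "i \<in> I" for i
      proof -
        have "int p ^ r i dvd x i" using d that by simp
        moreover have "0 \<le> x i" "x i < int p ^ r i" using G_range[OF xV that] by auto
        ultimately show ?thesis by (metis zdvd_imp_le not_less le_less)
      qed
      have "Rel x v" for v unfolding Rel_def using x0 by auto
      then show "(x, s) \<in> R\<^sup>*" using xW by (auto simp: W_iff)
    qed
  next
    case (Suc a)
    show ?case
    proof (intro ballI impI)
      fix x assume xW: "x \<in> W" and d: "\<forall>i\<in>I. int p ^ r i dvd int p ^ Suc a * x i"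
      have xV: "x \<in> carrier G" using xW by (simp add: W_iff)
      define y where "y = red (\<lambda>i. int p * x i)"
      have yV: "y \<in> carrier G" by (simp add: y_def red_in)
      have yc: "\<exists>c. y i = int p * x i - int p ^ r i * c" if "i \<in> I" for i
        using dvd_red[OF that, of "\<lambda>i. int p * x i"] by (simp add: y_def)
      have dy: "\<forall>i\<in>I. int p ^ r i dvd int p ^ a * y i"
      proof
        fix i assume i: "i \<in> I"
        obtain c where c: "y i = int p * x i - int p ^ r i * c" using yc[OF i] by blast
        have "int p ^ a * y i = int p ^ Suc a * x i - int p ^ r i * (int p ^ a * c)"
          by (simp add: c algebra_simps)
        then show "int p ^ r i dvd int p ^ a * y i" using d i by simp
      qed
      have Rxy: "Rel x y"
        unfolding Rel_def
      proof (intro allI impI)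
        fix i j assume ij: "1 \<le> (i::nat)" "i < j" "j \<le> k"
        then have iI: "i \<in> I" and jI: "j \<in> I" by auto
        obtain ci where ci: "y i = int p * x i - int p ^ r i * ci" using yc[OF iI] by blast
        obtain cj where cj: "y j = int p * x j - int p ^ r j * cj" using yc[OF jI] by blast
        have "r j \<le> r i" using rmono ij by auto
        then obtain e where e: "int p ^ r i = int p ^ r j * int p ^ e"
          by (metis le_add_diff_inverse power_add)
        have "x i * y j - x j * y i = int p ^ r j * (x j * int p ^ e * ci - x i * cj)"
          by (simp add: ci cj e algebra_simps)
        then show "int (p ^ r j) dvd x i * y j - x j * y i" by simp
      qed
      show "(x, s) \<in> R\<^sup>*"
      proof (cases "y \<in> W")
        case True
        then have "(y, s) \<in> R\<^sup>*" using Suc.IH dy by blast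
        moreover have "(x, y) \<in> R\<^sup>*" by (rule edge_or_eq[OF xW True Rxy])
        ultimately show ?thesis by simp
      next
        case False
        then have dom: "\<forall>v\<in>carrier G. Rel y v" using yV by (auto simp: W_iff)
        have pj: "int p ^ r j dvd int p * x j" if j: "2 \<le> j" "j \<le> k" for j
        proof -
          have jI: "j \<in> I" using j by auto
          have "Rel y (eI 1)" using dom eI_G I12 by auto
          then have "int (p ^ r j) dvd y 1 * eI 1 j - y j * eI 1 1" using j unfolding Rel_def by auto
          then have "int p ^ r j dvd y j" using jI j I12 by (simp add: eI_val)
          moreover obtain c where "y j = int p * x j - int p ^ r j * c" using yc[OF jI] by blast
          ultimately show ?thesis by (metis dvd_add_right_iff dvd_triv_left diff_add_cancel)
        qed
        have Rxs: "Rel x s"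
          unfolding Rel_def
        proof (intro allI impI)
          fix i j assume ij: "1 \<le> (i::nat)" "i < j" "j \<le> k"
          show "int (p ^ r j) dvd x i * s j - x j * s i"
          proof (cases "i = 1")
            case False then show ?thesis using ij s0[of i] s0[of j] by simp
          next
            case True
            have j: "2 \<le> j" "j \<le> k" using ij True by auto
            have rj: "r j \<ge> 1" using rpos j by auto
            have "int p * int p ^ (r j - 1) dvd int p * x j"
              using pj[OF j] rj by (metis power_Suc Suc_diff_1 not_one_le_zero less_le_trans zero_less_one le_less)
            then have "int p ^ (r j - 1) dvd x j" using p2 by (subst (asm) dvd_mult_cancel_left) auto
            then have "int p ^ (r j - 1) * int p ^ (r 2 - 1) dvd x j * int p ^ (r 2 - 1)"
              by (rule mult_dvd_mono) simp
            then have "int p ^ (r j - 1 + (r 2 - 1)) dvd x j * int p ^ (r 2 - 1)" by (simp add: power_add)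
            moreover have "int p ^ r j dvd int p ^ (r j - 1 + (r 2 - 1))"
              using rj r2 by (intro le_imp_power_dvd) auto
            ultimately have "int p ^ r j dvd x j * int p ^ (r 2 - 1)" by (rule dvd_trans[rotated])
            then show ?thesis using True s1 s0[of j] j by (simp add: mult.commute)
          qed
        qed
        show ?thesis by (rule edge_or_eq[OF xW sW Rxs])
      qed
    qed
  qed
  have conn: "(x, s) \<in> R\<^sup>*" if "x \<in> W" for x
  proof -
    have xV: "x \<in> carrier G" using that by (simp add: W_iff)
    have "\<forall>i\<in>I. int p ^ r i dvd int p ^ r 1 * x i"
    proof
      fix i assume "i \<in> I"
      then have "r i \<le> r 1" by (rule r_le1)
      then have "int p ^ r i dvd int p ^ r 1" by (rule le_imp_power_dvd)
      then show "int p ^ r i dvd int p ^ r 1 * x i" by simp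
    qed
    then show ?thesis using main that by blast
  qed
  show ?thesis
    unfolding induced_disconnected_def
  proof (clarify)
    fix u w assume uW: "u \<in> W" and wW: "w \<in> W" and nc: "(u, w) \<notin> R\<^sup>*"
    have us: "(u, s) \<in> R\<^sup>*" by (rule conn[OF uW])
    have sw: "(s, w) \<in> R\<^sup>*" by (rule rt_sym[OF conn[OF wW]])
    show False using rtrancl_trans[OF us sw] nc by simp
  qed
qed

end

theorem theorem4p6:
  fixes p k :: nat and r :: "nat \<Rightarrow> nat"
    and H :: "nat monoid" and \<pi> :: "nat \<Rightarrow> (nat \<Rightarrow> int)"
  assumes "Factorial_Ring.prime p"
    and "k \<ge> 2"
    and "\<forall>i \<in> {1..k}. r i \<ge> 1"
    and "\<forall>i j. 1 \<le> i \<longrightarrow> i \<le> j \<longrightarrow> j \<le> k \<longrightarrow> r j \<le> r i"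
    and "schur_cover H (product_group {1..k} (\<lambda>i. integer_mod_group (p ^ r i))) \<pi>"
  shows "induced_disconnected
           (reduced_vertices (carrier (product_group {1..k} (\<lambda>i. integer_mod_group (p ^ r i))))
              (deep_adj H (product_group {1..k} (\<lambda>i. integer_mod_group (p ^ r i))) \<pi>))
           (deep_adj H (product_group {1..k} (\<lambda>i. integer_mod_group (p ^ r i))) \<pi>)
         \<longleftrightarrow> r 2 = 1"
proof -
  interpret gr p k r using assms(1-4) by unfold_locales
  have sc: "schur_cover H G \<pi>" using assms(5) by simp
  have st: "stem_extension H G \<pi>" and fin: "finite (carrier H)"
    using sc by (auto simp: schur_cover_def)
  interpret S: stem k "\<lambda>i. p ^ r i" H \<pi>
  proof unfold_locales
    show "stem_extension H G \<pi>" by (rule st)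
  qed
  have big: "card (carrier G) * card A \<le> card (carrier H)" by (rule schur_big[OF sc])
  have adj: "deep_adj H G \<pi> = E"
  proof (intro ext)
    fix x y
    show "deep_adj H G \<pi> x y = E x y"
    proof (cases "x \<in> carrier G \<and> y \<in> carrier G")
      case True
      then show ?thesis using S.adj_iff[OF fin big] by (auto simp: deep_adj_def E_def)
    next
      case False
      then show ?thesis by (auto simp: deep_adj_def E_def)
    qed
  qed
  have r2: "r 2 \<ge> 1" using assms(2,3) by auto
  have "induced_disconnected W E \<longleftrightarrow> r 2 = 1"
  proof
    assume "induced_disconnected W E"
    then show "r 2 = 1" using dir2 r2 by fastforce
  next
    assume "r 2 = 1" then show "induced_disconnected W E" by (rule dir1)
  qed
  then show ?thesis using adj by simp
qed

end
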